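(* Consider the regular partially labeled binary broadcasting tree $\text{Tree}_{k=2}(\theta,d,\delta)$ rooted at $\rho$ (see context), with $0<\theta<1$, and assume $\delta d=O(1)$. Let $M_t(\ell_{T_{\leq t}(\rho)})$ be the message computed by the approximate message passing recursion in the context. Define $\mu_1=\theta\delta d\log\frac{1+\theta}{1-\theta}$, $\sigma_1^2=\delta d\log^2\frac{1+\theta}{1-\theta}$, $\alpha=(1-\delta)\theta^2 d$, and for $t\geq 2$ $$\mu_t=\mu_1+\alpha\mu_{t-1},\qquad \sigma_t^2=\sigma_1^2+\alpha\sigma_{t-1}^2+\alpha\mu_{t-1}^2.$$ Then explicitly $$\mu_t=\frac{\alpha^t-1}{\alpha-1}\mu_1,\qquad \sigma_t^2=\frac{\alpha^t-1}{\alpha-1}\sigma_1^2+\frac{\frac{\alpha^{2t}-\alpha^{t+1}+\alpha^t-\alpha}{\alpha-1}-2(t-1)\alpha^t}{(\alpha-1)^2}\mu_1^2.$$ Moreover, for any depth $t$ and $x>0$, conditionally on $\ell(\rho)=+$, $\mu_t-x\sigma_t\leq M_t(\ell_{T_{\leq t}(\rho)})\leq \mu_t+x\sigma_t$, and conditionally on $\ell(\rho)=-$, $-\mu_t-x\sigma_t\leq M_t(\ell_{T_{\leq t}(\rho)})\leq -\mu_t+x\sigma_t$, each with probability at least $1-2\exp(-x^2/2)$.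
   Context: $\text{Tree}_{k=2}(\theta,d,\delta)$ (regular version): a rooted tree in which every vertex has $d$ children, exactly $\delta d$ of which have revealed labels and $(1-\delta)d$ of which are unlabeled (assume these are integers). The root label $\ell(\rho)\in\{+,-\}$ is unrevealed. Labels are broadcast from parent to child: a child receives its parent's label with probability $\frac{1+\theta}{2}$ and the opposite label with probability $\frac{1-\theta}{2}$, independently. $\ell_{T_{\leq t}(\rho)}$ denotes the revealed labels in the depth-$t$ tree. AMP recursion: for an unlabeled vertex $v$, $M_0(v)=0$, $M_1(v)=(N_+(v)-N_-(v))\log\frac{1+\theta}{1-\theta}$, where $N_\pm(v)$ is the number of labeled children of $v$ with label $\pm$, and $M_i(v)=M_1(v)+\theta\sum_{u\text{ unlabeled child of }v}M_{i-1}(u)$, computed bottom-up from the depth-$t$ layer; the output label is $\operatorname{sgn}(M_t(\rho))$. *)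

theory Defs
  imports "HOL-Probability.Probability"
begin

text \<open>Vertices of the regular d-ary tree are paths from the root: lists of child indices
  (each < d).  Child j of a vertex is labeled (revealed) iff j < delta*d, otherwise unlabeled.
  Labels: True = +, False = -.\<close>

definition n_lab :: "real \<Rightarrow> nat \<Rightarrow> nat" where
  "n_lab \<delta> d = nat \<lfloor>\<delta> * real d\<rfloor>"

definition child_label :: "real \<Rightarrow> bool \<Rightarrow> bool pmf" where
  "child_label \<theta> s = map_pmf (\<lambda>b. if b then s else \<not> s) (bernoulli_pmf ((1 + \<theta>) / 2))"

text \<open>Joint law of the labels of the depth-t tree, given the root label s (broadcasting).
  Vertices outside the depth-t tree get the dummy value False.\<close>
fun broadcast :: "real \<Rightarrow> nat \<Rightarrow> nat \<Rightarrow> bool \<Rightarrow> (nat list \<Rightarrow> bool) pmf" where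
  "broadcast \<theta> d 0 s = return_pmf (\<lambda>v. if v = [] then s else False)"
| "broadcast \<theta> d (Suc t) s =
     map_pmf (\<lambda>f v. case v of [] \<Rightarrow> s | j # w \<Rightarrow> f j w)
       (Pi_pmf {..<d} (\<lambda>_. False) (\<lambda>j. bind_pmf (child_label \<theta> s) (\<lambda>c. broadcast \<theta> d t c)))"

definition amp_M1 :: "real \<Rightarrow> real \<Rightarrow> nat \<Rightarrow> (nat list \<Rightarrow> bool) \<Rightarrow> nat list \<Rightarrow> real" where
  "amp_M1 \<theta> \<delta> d L v =
     (real (card {j. j < n_lab \<delta> d \<and> L (v @ [j])}) - real (card {j. j < n_lab \<delta> d \<and> \<not> L (v @ [j])}))
       * ln ((1 + \<theta>) / (1 - \<theta>))"

fun amp_M :: "real \<Rightarrow> real \<Rightarrow> nat \<Rightarrow> nat \<Rightarrow> (nat list \<Rightarrow> bool) \<Rightarrow> nat list \<Rightarrow> real" where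
  "amp_M \<theta> \<delta> d 0 L v = 0"
| "amp_M \<theta> \<delta> d (Suc i) L v =
     amp_M1 \<theta> \<delta> d L v + \<theta> * (\<Sum>j\<in>{n_lab \<delta> d..<d}. amp_M \<theta> \<delta> d i L (v @ [j]))"

definition mu1 :: "real \<Rightarrow> real \<Rightarrow> nat \<Rightarrow> real" where
  "mu1 \<theta> \<delta> d = \<theta> * \<delta> * real d * ln ((1 + \<theta>) / (1 - \<theta>))"

definition sigma1_sq :: "real \<Rightarrow> real \<Rightarrow> nat \<Rightarrow> real" where
  "sigma1_sq \<theta> \<delta> d = \<delta> * real d * (ln ((1 + \<theta>) / (1 - \<theta>)))\<^sup>2"

definition amp_alpha :: "real \<Rightarrow> real \<Rightarrow> nat \<Rightarrow> real" where
  "amp_alpha \<theta> \<delta> d = (1 - \<delta>) * \<theta>\<^sup>2 * real d"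

text \<open>mu_t and sigma_t^2 for t >= 1 (value at t = 0 is an auxiliary 0, so that
  mu_1 = mu1 and sigma_1^2 = sigma1_sq and the recursions hold for t >= 2).\<close>
fun amp_mu :: "real \<Rightarrow> real \<Rightarrow> nat \<Rightarrow> nat \<Rightarrow> real" where
  "amp_mu \<theta> \<delta> d 0 = 0"
| "amp_mu \<theta> \<delta> d (Suc t) = mu1 \<theta> \<delta> d + amp_alpha \<theta> \<delta> d * amp_mu \<theta> \<delta> d t"

fun amp_sigma_sq :: "real \<Rightarrow> real \<Rightarrow> nat \<Rightarrow> nat \<Rightarrow> real" where
  "amp_sigma_sq \<theta> \<delta> d 0 = 0"
| "amp_sigma_sq \<theta> \<delta> d (Suc t) = sigma1_sq \<theta> \<delta> d + amp_alpha \<theta> \<delta> d * amp_sigma_sq \<theta> \<delta> d t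
     + amp_alpha \<theta> \<delta> d * (amp_mu \<theta> \<delta> d t)\<^sup>2"

end

theory Submission
  imports Defs
begin


lemma mu_closed:
  assumes "amp_alpha \<theta> \<delta> d \<noteq> 1"
  shows "amp_mu \<theta> \<delta> d t = (amp_alpha \<theta> \<delta> d ^ t - 1) / (amp_alpha \<theta> \<delta> d - 1) * mu1 \<theta> \<delta> d"
proof (induction t)
  case 0 then show ?case by simp
next
  case (Suc t)
  have ne: "amp_alpha \<theta> \<delta> d - 1 \<noteq> 0" using assms by simp
  show ?case using Suc ne by (simp add: field_simps)
qed

lemma sig_alg:
  fixes a A m sx :: real and t :: nat
  assumes "a \<noteq> 1"
  shows "sx + a * ((A - 1) / (a - 1) * sx + ((A^2 - a*A + A - a) / (a - 1) - 2 * (real t - 1) * A) / (a - 1)\<^sup>2 * m\<^sup>2)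
      + a * ((A - 1) / (a - 1) * m)\<^sup>2
    = (a*A - 1) / (a - 1) * sx + (((a*A)^2 - a*(a*A) + a*A - a) / (a - 1) - 2 * (real (Suc t) - 1) * (a*A)) / (a - 1)\<^sup>2 * m\<^sup>2"
proof -
  have ne: "a - 1 \<noteq> 0" using assms by simp
  have ne2: "(a - 1)^2 \<noteq> 0" using ne by simp
  show ?thesis using ne ne2 apply (simp add: divide_simps) apply (simp add: algebra_simps power2_eq_square) done
qed



lemma hoeff_pos:
  fixes a th :: real
  assumes "0 \<le> a" "-1 \<le> th" "th \<le> 1"
  shows "(1 + th) / 2 * exp (a * (1 - th)) + (1 - th) / 2 * exp (- a * (1 + th)) \<le> exp (a\<^sup>2 / 2)"
proof -
  define p where "p = (1 + th) / 2"
  have p0: "p \<ge> 0" "p \<le> 1" using assms by (auto simp: p_def)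
  have pos: "1 + p * (exp (2*a) - 1) > 0"
    using p0 assms by (intro add_pos_nonneg mult_nonneg_nonneg) auto
  have aux: "-(2*a) * p + ln (1 + p * (exp (2*a) - 1)) \<le> (2*a)\<^sup>2 / 8"
    using Hoeffdings_lemma_aux[of "2*a" p] assms p0 by simp
  have "(1 + th) / 2 * exp (a * (1 - th)) + (1 - th) / 2 * exp (- a * (1 + th))
      = exp (-(2*a) * p) * (1 + p * (exp (2*a) - 1))"
  proof -
    have e1: "exp (a * (1 - th)) = exp (-(2*a)*p) * exp (2*a)"
      by (simp add: p_def mult_exp_exp field_simps)
    have e2: "exp (- a * (1 + th)) = exp (-(2*a)*p)"
      by (simp add: p_def algebra_simps)
    define E where "E = exp (-(2*a)*p)"
    show ?thesis unfolding e1 e2 E_def[symmetric] by (simp add: p_def field_simps)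
  qed
  also have "\<dots> = exp (-(2*a) * p + ln (1 + p * (exp (2*a) - 1)))"
    using pos by (simp only: exp_add exp_ln)
  also have "\<dots> \<le> exp ((2*a)\<^sup>2 / 8)" using aux by simp
  also have "(2*a)\<^sup>2 / 8 = a\<^sup>2 / 2" by (simp add: power2_eq_square)
  finally show ?thesis .
qed

lemma hoeff:
  fixes a th :: real
  assumes "-1 \<le> th" "th \<le> 1"
  shows "(1 + th) / 2 * exp (a * (1 - th)) + (1 - th) / 2 * exp (- a * (1 + th)) \<le> exp (a\<^sup>2 / 2)"
proof (cases "a \<ge> 0")
  case True then show ?thesis using hoeff_pos assms by blast
next
  case False
  have "(1 + (-th)) / 2 * exp ((-a) * (1 - (-th))) + (1 - (-th)) / 2 * exp (- (-a) * (1 + (-th))) \<le> exp ((-a)\<^sup>2 / 2)"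
    using False assms by (intro hoeff_pos) auto
  then show ?thesis by (simp add: algebra_simps)
qed



definition sg :: "bool \<Rightarrow> real" where "sg b = (if b then 1 else -1)"

lemma abs_sg[simp]: "\<bar>sg b\<bar> = 1" by (simp add: sg_def)

lemma sg_sq[simp]: "sg b * sg b = 1" by (simp add: sg_def)

lemma amp_M1_shift: "amp_M1 \<theta> \<delta> d L (j # w) = amp_M1 \<theta> \<delta> d (\<lambda>u. L (j # u)) w"
  by (simp add: amp_M1_def)

lemma amp_M_shift: "amp_M \<theta> \<delta> d i L (j # w) = amp_M \<theta> \<delta> d i (\<lambda>u. L (j # u)) w"
  by (induction i arbitrary: w) (simp_all add: amp_M1_shift)

lemma card_diff_sum:
  fixes n :: nat shows "real (card {j. j < n \<and> P j}) - real (card {j. j < n \<and> \<not> P j}) = (\<Sum>j<n. sg (P j))"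
proof (induction n)
  case 0 then show ?case by simp
next
  case (Suc n)
  have A: "{j. j < Suc n \<and> P j} = (if P n then insert n {j. j < n \<and> P j} else {j. j < n \<and> P j})"
    by (auto simp: less_Suc_eq)
  have B: "{j. j < Suc n \<and> \<not> P j} = (if P n then {j. j < n \<and> \<not> P j} else insert n {j. j < n \<and> \<not> P j})"
    by (auto simp: less_Suc_eq)
  show ?case using Suc by (simp add: A B sg_def)
qed

lemma amp_M1_sum: "amp_M1 \<theta> \<delta> d L v = (\<Sum>j<n_lab \<delta> d. sg (L (v @ [j]))) * ln ((1 + \<theta>) / (1 - \<theta>))"
  by (simp add: amp_M1_def card_diff_sum)

lemma root_label: "L \<in> set_pmf (broadcast \<theta> d t s) \<Longrightarrow> L [] = s"
  by (cases t) auto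

lemma amp_M_bounded: "\<exists>B. \<forall>L v. \<bar>amp_M \<theta> \<delta> d t L v\<bar> \<le> B"
proof (induction t)
  case 0 then show ?case by auto
next
  case (Suc t)
  then obtain B where B: "\<And>L v. \<bar>amp_M \<theta> \<delta> d t L v\<bar> \<le> B" by blast
  define c where "c = ln ((1 + \<theta>) / (1 - \<theta>))"
  have "\<bar>amp_M \<theta> \<delta> d (Suc t) L v\<bar> \<le> real (n_lab \<delta> d) * \<bar>c\<bar> + \<bar>\<theta>\<bar> * (real d * B)" for L v
  proof -
    have s1: "\<bar>\<Sum>j<n_lab \<delta> d. sg (L (v @ [j]))\<bar> \<le> real (n_lab \<delta> d)"
    proof -
      have "\<bar>\<Sum>j<n_lab \<delta> d. sg (L (v @ [j]))\<bar> \<le> (\<Sum>j<n_lab \<delta> d. \<bar>sg (L (v @ [j]))\<bar>)"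
        by (rule sum_abs)
      also have "\<dots> = real (n_lab \<delta> d)" by (simp add: abs_sg)
      finally show ?thesis .
    qed
    have s2: "\<bar>\<Sum>j\<in>{n_lab \<delta> d..<d}. amp_M \<theta> \<delta> d t L (v @ [j])\<bar> \<le> real d * B"
    proof -
      have "\<bar>\<Sum>j\<in>{n_lab \<delta> d..<d}. amp_M \<theta> \<delta> d t L (v @ [j])\<bar> \<le> (\<Sum>j\<in>{n_lab \<delta> d..<d}. \<bar>amp_M \<theta> \<delta> d t L (v @ [j])\<bar>)"
        by (rule sum_abs)
      also have "\<dots> \<le> (\<Sum>j\<in>{n_lab \<delta> d..<d}. B)" by (intro sum_mono B)
      also have "\<dots> = real (d - n_lab \<delta> d) * B" by simp
      also have "\<dots> \<le> real d * B" using B[of L v] by (intro mult_right_mono) auto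
      finally show ?thesis .
    qed
    have "\<bar>amp_M \<theta> \<delta> d (Suc t) L v\<bar> \<le> \<bar>(\<Sum>j<n_lab \<delta> d. sg (L (v @ [j]))) * c\<bar> + \<bar>\<theta>\<bar> * \<bar>\<Sum>j\<in>{n_lab \<delta> d..<d}. amp_M \<theta> \<delta> d t L (v @ [j])\<bar>"
      by (simp add: amp_M1_sum c_def abs_mult[symmetric] abs_triangle_ineq)
    also have "\<dots> \<le> real (n_lab \<delta> d) * \<bar>c\<bar> + \<bar>\<theta>\<bar> * (real d * B)"
      using s1 s2 by (intro add_mono mult_mono) (auto simp: abs_mult intro: mult_right_mono)
    finally show ?thesis .
  qed
  then show ?case by blast
qed

lemma expectation_bind_pmf:
  fixes g :: "'b \<Rightarrow> real"
  assumes "\<And>y. 0 \<le> g y" "\<And>y. g y \<le> B"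
  shows "measure_pmf.expectation (bind_pmf p q) g = measure_pmf.expectation p (\<lambda>x. measure_pmf.expectation (q x) g)"
proof -
  have int: "integrable (measure_pmf r) g" for r
    using assms by (intro measure_pmf.integrable_const_bound[where B=B]) auto
  have int2: "integrable (measure_pmf p) (\<lambda>x. measure_pmf.expectation (q x) g)"
  proof (intro measure_pmf.integrable_const_bound[where B=B])
    show "AE x in measure_pmf p. norm (measure_pmf.expectation (q x) g) \<le> B"
    proof (intro AE_pmfI)
      fix x
      have "0 \<le> measure_pmf.expectation (q x) g" using assms by (intro Bochner_Integration.integral_nonneg) auto
      moreover have "measure_pmf.expectation (q x) g \<le> measure_pmf.expectation (q x) (\<lambda>_. B)"
        using assms int by (intro integral_mono) auto
      ultimately show "norm (measure_pmf.expectation (q x) g) \<le> B" by simp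
    qed
  qed simp
  have "ennreal (measure_pmf.expectation (bind_pmf p q) g) = (\<integral>\<^sup>+y. ennreal (g y) \<partial>bind_pmf p q)"
    using assms int by (intro nn_integral_eq_integral[symmetric]) auto
  also have "\<dots> = (\<integral>\<^sup>+x. \<integral>\<^sup>+y. ennreal (g y) \<partial>q x \<partial>p)" by simp
  also have "\<dots> = (\<integral>\<^sup>+x. ennreal (measure_pmf.expectation (q x) g) \<partial>p)"
    using assms int by (intro nn_integral_cong nn_integral_eq_integral) auto
  also have "\<dots> = ennreal (measure_pmf.expectation p (\<lambda>x. measure_pmf.expectation (q x) g))"
    using assms int2 by (intro nn_integral_eq_integral) (auto intro!: Bochner_Integration.integral_nonneg)
  finally show ?thesis
    using assms by (subst (asm) ennreal_inj) (auto intro!: Bochner_Integration.integral_nonneg)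
qed

lemma sum_split_if:
  fixes a b :: "nat \<Rightarrow> 'a::comm_monoid_add"
  assumes "n \<le> d"
  shows "(\<Sum>j<d. if j < n then a j else b j) = (\<Sum>j<n. a j) + (\<Sum>j\<in>{n..<d}. b j)"
proof -
  have eq: "{..<d} = {..<n} \<union> {n..<d}" using assms by auto
  have "(\<Sum>j<d. if j < n then a j else b j) = (\<Sum>j\<in>{..<n} \<union> {n..<d}. if j < n then a j else b j)"
    by (simp only: eq)
  also have "\<dots> = (\<Sum>j<n. if j < n then a j else b j) + (\<Sum>j\<in>{n..<d}. if j < n then a j else b j)"
    by (rule sum.union_disjoint) auto
  also have "\<dots> = (\<Sum>j<n. a j) + (\<Sum>j\<in>{n..<d}. b j)"
    by (intro arg_cong2[where f="(+)"] sum.cong) auto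
  finally show ?thesis .
qed

lemma prod_split_if:
  fixes a b :: "nat \<Rightarrow> 'a::comm_monoid_mult"
  assumes "n \<le> d"
  shows "(\<Prod>j<d. if j < n then a j else b j) = (\<Prod>j<n. a j) * (\<Prod>j\<in>{n..<d}. b j)"
proof -
  have eq: "{..<d} = {..<n} \<union> {n..<d}" using assms by auto
  have "(\<Prod>j<d. if j < n then a j else b j) = (\<Prod>j\<in>{..<n} \<union> {n..<d}. if j < n then a j else b j)"
    by (simp only: eq)
  also have "\<dots> = (\<Prod>j<n. if j < n then a j else b j) * (\<Prod>j\<in>{n..<d}. if j < n then a j else b j)"
    by (rule prod.union_disjoint) auto
  also have "\<dots> = (\<Prod>j<n. a j) * (\<Prod>j\<in>{n..<d}. b j)"
    by (intro arg_cong2[where f="(*)"] prod.cong) auto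
  finally show ?thesis .
qed



lemma integrable_exp_bounded:
  fixes f :: "'a \<Rightarrow> real"
  assumes "\<And>x. \<bar>f x\<bar> \<le> K"
  shows "integrable (measure_pmf p) (\<lambda>x. exp (f x))"
proof (rule measure_pmf.integrable_const_bound[where B="exp K"])
  show "AE x in measure_pmf p. norm (exp (f x)) \<le> exp K"
    using assms by (intro AE_I2) (auto simp: abs_le_iff)
qed simp

lemma expectation_const_on_support:
  fixes g :: "'a \<Rightarrow> real"
  assumes "\<And>x. x \<in> set_pmf p \<Longrightarrow> g x = k"
  shows "measure_pmf.expectation p g = k"
proof -
  have "measure_pmf.expectation p g = measure_pmf.expectation p (\<lambda>_. k)"
    using assms by (intro integral_cong_AE) (auto intro!: AE_pmfI)
  then show ?thesis by simp
qed

lemma expectation_child: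
  fixes g :: "bool \<Rightarrow> real"
  assumes "-1 \<le> \<theta>" "\<theta> \<le> 1"
  shows "measure_pmf.expectation (child_label \<theta> s) g = (1 + \<theta>) / 2 * g s + (1 - \<theta>) / 2 * g (\<not> s)"
  using assms by (simp add: child_label_def field_simps)



lemma mgf:
  assumes th: "0 < \<theta>" "\<theta> < 1" and nd: "n_lab \<delta> d \<le> d"
    and nreal: "real (n_lab \<delta> d) = \<delta> * real d"
  shows "measure_pmf.expectation (broadcast \<theta> d t s)
           (\<lambda>L. exp (l * (amp_M \<theta> \<delta> d t L [] - sg s * amp_mu \<theta> \<delta> d t)))
         \<le> exp (l\<^sup>2 * amp_sigma_sq \<theta> \<delta> d t / 2)"
proof (induction t arbitrary: l s)
  case 0 then show ?case by simp
next
  case (Suc t)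
  define n where "n = n_lab \<delta> d"
  define c where "c = ln ((1 + \<theta>) / (1 - \<theta>))"
  define \<mu> where "\<mu> = amp_mu \<theta> \<delta> d t"
  define \<sigma>2 where "\<sigma>2 = amp_sigma_sq \<theta> \<delta> d t"
  define Q where "Q = bind_pmf (child_label \<theta> s) (\<lambda>c. broadcast \<theta> d t c)"
  define mk :: "(nat \<Rightarrow> nat list \<Rightarrow> bool) \<Rightarrow> nat list \<Rightarrow> bool"
    where "mk = (\<lambda>f v. case v of [] \<Rightarrow> s | j # w \<Rightarrow> f j w)"
  define E where "E = (\<lambda>j (h :: nat list \<Rightarrow> bool). if j < n then l * c * (sg (h []) - sg s * \<theta>)
                         else l * \<theta> * (amp_M \<theta> \<delta> d t h [] - sg s * \<theta> * \<mu>))"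
  have nd': "n \<le> d" using nd by (simp add: n_def)
  have nreal': "real n = \<delta> * real d" using nreal by (simp add: n_def)
  have rdn: "real (d - n) = (1 - \<delta>) * real d" using nd' nreal by (simp add: n_def of_nat_diff algebra_simps)
  have mu_Suc: "amp_mu \<theta> \<delta> d (Suc t) = \<theta> * real n * c + \<theta>\<^sup>2 * real (d - n) * \<mu>"
    by (simp add: mu1_def amp_alpha_def \<mu>_def c_def rdn nreal' algebra_simps)
  have sig_Suc: "amp_sigma_sq \<theta> \<delta> d (Suc t) = real n * c\<^sup>2 + real (d - n) * (\<theta>\<^sup>2 * \<sigma>2 + \<theta>\<^sup>2 * \<mu>\<^sup>2)"
    by (simp add: sigma1_sq_def amp_alpha_def \<mu>_def \<sigma>2_def c_def rdn nreal' algebra_simps)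
  have fact: "exp (l * (amp_M \<theta> \<delta> d (Suc t) (mk f) [] - sg s * amp_mu \<theta> \<delta> d (Suc t)))
      = (\<Prod>j<d. exp (E j (f j)))" for f
  proof -
    have M: "amp_M \<theta> \<delta> d (Suc t) (mk f) [] = (\<Sum>j<n. sg (f j [])) * c + \<theta> * (\<Sum>j\<in>{n..<d}. amp_M \<theta> \<delta> d t (f j) [])"
      by (simp add: amp_M1_sum amp_M_shift mk_def n_def c_def)
    have "(\<Sum>j<d. E j (f j)) = (\<Sum>j<n. l * c * (sg (f j []) - sg s * \<theta>))
          + (\<Sum>j\<in>{n..<d}. l * \<theta> * (amp_M \<theta> \<delta> d t (f j) [] - sg s * \<theta> * \<mu>))"
      unfolding E_def using nd' by (rule sum_split_if)
    also have "\<dots> = l * (amp_M \<theta> \<delta> d (Suc t) (mk f) [] - sg s * amp_mu \<theta> \<delta> d (Suc t))"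
      unfolding M mu_Suc
      by (simp add: sum_subtractf sum_distrib_left[symmetric] algebra_simps power2_eq_square)
    finally have eq: "(\<Sum>j<d. E j (f j)) = l * (amp_M \<theta> \<delta> d (Suc t) (mk f) [] - sg s * amp_mu \<theta> \<delta> d (Suc t))" .
    have "exp (\<Sum>j<d. E j (f j)) = (\<Prod>j<d. exp (E j (f j)))" by (rule exp_sum) simp
    then show ?thesis by (simp only: eq)
  qed
  obtain B where B: "\<And>L v. \<bar>amp_M \<theta> \<delta> d t L v\<bar> \<le> B" using amp_M_bounded by blast
  define K where "K = \<bar>l * c\<bar> * 2 + \<bar>l * \<theta>\<bar> * (B + \<bar>\<theta>\<bar> * \<bar>\<mu>\<bar>)"
  have Kb: "\<bar>E j h\<bar> \<le> K" for j h
  proof (cases "j < n")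
    case True
    have "\<bar>sg (h []) - sg s * \<theta>\<bar> \<le> 2" using th by (simp add: sg_def)
    then have "\<bar>l * c\<bar> * \<bar>sg (h []) - sg s * \<theta>\<bar> \<le> \<bar>l * c\<bar> * 2" by (intro mult_left_mono) auto
    moreover have "0 \<le> \<bar>l * \<theta>\<bar> * (B + \<bar>\<theta>\<bar> * \<bar>\<mu>\<bar>)"
      using B[of h "[]"] by (intro mult_nonneg_nonneg) auto
    ultimately show ?thesis using True by (simp add: E_def K_def abs_mult)
  next
    case False
    have "\<bar>amp_M \<theta> \<delta> d t h [] - sg s * \<theta> * \<mu>\<bar> \<le> B + \<bar>\<theta>\<bar> * \<bar>\<mu>\<bar>"
    proof -
      have "\<bar>sg s * \<theta> * \<mu>\<bar> = \<bar>\<theta>\<bar> * \<bar>\<mu>\<bar>" by (simp add: abs_mult)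
      moreover have "\<bar>amp_M \<theta> \<delta> d t h [] - sg s * \<theta> * \<mu>\<bar> \<le> \<bar>amp_M \<theta> \<delta> d t h []\<bar> + \<bar>sg s * \<theta> * \<mu>\<bar>"
        by (rule abs_triangle_ineq4)
      ultimately show ?thesis using B[of h "[]"] by linarith
    qed
    then have "\<bar>l * \<theta>\<bar> * \<bar>amp_M \<theta> \<delta> d t h [] - sg s * \<theta> * \<mu>\<bar> \<le> \<bar>l * \<theta>\<bar> * (B + \<bar>\<theta>\<bar> * \<bar>\<mu>\<bar>)"
      by (intro mult_left_mono) auto
    moreover have "0 \<le> \<bar>l * c\<bar> * 2" by simp
    moreover have "\<bar>E j h\<bar> = \<bar>l * \<theta>\<bar> * \<bar>amp_M \<theta> \<delta> d t h [] - sg s * \<theta> * \<mu>\<bar>"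
      using False by (simp add: E_def abs_mult)
    ultimately show ?thesis unfolding K_def by linarith
  qed
  have expK: "exp (E j h) \<le> exp K" for j h using Kb[of j h] by simp
  have brd: "broadcast \<theta> d (Suc t) s = map_pmf mk (Pi_pmf {..<d} (\<lambda>_. False) (\<lambda>j. Q))"
    by (simp add: mk_def Q_def)
  have "measure_pmf.expectation (broadcast \<theta> d (Suc t) s)
           (\<lambda>L. exp (l * (amp_M \<theta> \<delta> d (Suc t) L [] - sg s * amp_mu \<theta> \<delta> d (Suc t))))
      = measure_pmf.expectation (Pi_pmf {..<d} (\<lambda>_. False) (\<lambda>j. Q)) (\<lambda>f. \<Prod>j<d. exp (E j (f j)))"
    unfolding brd integral_map_pmf by (simp only: fact)
  also have "\<dots> = (\<Prod>j<d. measure_pmf.expectation Q (\<lambda>h. exp (E j h)))"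
    by (rule expectation_prod_Pi_pmf) (auto intro: integrable_exp_bounded[OF Kb])
  also have "\<dots> \<le> (\<Prod>j<d. if j < n then exp ((l * c)\<^sup>2 / 2)
                      else exp ((l * \<theta>)\<^sup>2 * \<sigma>2 / 2) * exp ((l * \<theta> * \<mu>)\<^sup>2 / 2))"
  proof (rule prod_mono, rule conjI)
    fix j assume "j \<in> {..<d}"
    show "0 \<le> measure_pmf.expectation Q (\<lambda>h. exp (E j h))"
      by (intro Bochner_Integration.integral_nonneg) auto
    have bindQ: "measure_pmf.expectation Q (\<lambda>h. exp (E j h))
        = measure_pmf.expectation (child_label \<theta> s) (\<lambda>c'. measure_pmf.expectation (broadcast \<theta> d t c') (\<lambda>h. exp (E j h)))"
      unfolding Q_def by (rule expectation_bind_pmf[where B="exp K"]) (auto intro: order_trans[OF abs_ge_self Kb])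
    show "measure_pmf.expectation Q (\<lambda>h. exp (E j h)) \<le> (if j < n then exp ((l * c)\<^sup>2 / 2)
                      else exp ((l * \<theta>)\<^sup>2 * \<sigma>2 / 2) * exp ((l * \<theta> * \<mu>)\<^sup>2 / 2))"
    proof (cases "j < n")
      case True
      have inner: "measure_pmf.expectation (broadcast \<theta> d t c') (\<lambda>h. exp (E j h)) = exp (l * c * (sg c' - sg s * \<theta>))" for c'
        by (rule expectation_const_on_support) (auto simp: E_def True root_label)
      have "measure_pmf.expectation Q (\<lambda>h. exp (E j h))
          = (1 + \<theta>) / 2 * exp (l * c * (sg s - sg s * \<theta>)) + (1 - \<theta>) / 2 * exp (l * c * (sg (\<not> s) - sg s * \<theta>))"
        unfolding bindQ inner using th by (subst expectation_child) auto
      also have "\<dots> \<le> exp ((l * c)\<^sup>2 / 2)"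
      proof (cases s)
        case True then show ?thesis using hoeff[of \<theta> "l * c"] th by (simp add: sg_def algebra_simps)
      next
        case False then show ?thesis using hoeff[of \<theta> "- (l * c)"] th by (simp add: sg_def algebra_simps)
      qed
      finally show ?thesis using True by simp
    next
      case False
      have inner: "measure_pmf.expectation (broadcast \<theta> d t c') (\<lambda>h. exp (E j h))
          \<le> exp (l * \<theta> * \<mu> * (sg c' - sg s * \<theta>)) * exp ((l * \<theta>)\<^sup>2 * \<sigma>2 / 2)" for c'
      proof -
        have "measure_pmf.expectation (broadcast \<theta> d t c') (\<lambda>h. exp (E j h))
            = measure_pmf.expectation (broadcast \<theta> d t c') (\<lambda>h. exp (l * \<theta> * \<mu> * (sg c' - sg s * \<theta>)) *
                 exp ((l * \<theta>) * (amp_M \<theta> \<delta> d t h [] - sg c' * amp_mu \<theta> \<delta> d t)))"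
          by (intro Bochner_Integration.integral_cong refl)
             (simp add: E_def False \<mu>_def mult_exp_exp algebra_simps)
        also have "\<dots> = exp (l * \<theta> * \<mu> * (sg c' - sg s * \<theta>)) *
            measure_pmf.expectation (broadcast \<theta> d t c') (\<lambda>h. exp ((l * \<theta>) * (amp_M \<theta> \<delta> d t h [] - sg c' * amp_mu \<theta> \<delta> d t)))"
          by simp
        also have "\<dots> \<le> exp (l * \<theta> * \<mu> * (sg c' - sg s * \<theta>)) * exp ((l * \<theta>)\<^sup>2 * \<sigma>2 / 2)"
          unfolding \<sigma>2_def by (intro mult_left_mono Suc.IH) auto
        finally show ?thesis .
      qed
      have "measure_pmf.expectation Q (\<lambda>h. exp (E j h))
          \<le> (1 + \<theta>) / 2 * (exp (l * \<theta> * \<mu> * (sg s - sg s * \<theta>)) * exp ((l * \<theta>)\<^sup>2 * \<sigma>2 / 2))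
            + (1 - \<theta>) / 2 * (exp (l * \<theta> * \<mu> * (sg (\<not> s) - sg s * \<theta>)) * exp ((l * \<theta>)\<^sup>2 * \<sigma>2 / 2))"
        unfolding bindQ using th by (subst expectation_child) (auto intro!: add_mono mult_left_mono inner)
      also have "\<dots> = exp ((l * \<theta>)\<^sup>2 * \<sigma>2 / 2) * ((1 + \<theta>) / 2 * exp (l * \<theta> * \<mu> * (sg s - sg s * \<theta>))
            + (1 - \<theta>) / 2 * exp (l * \<theta> * \<mu> * (sg (\<not> s) - sg s * \<theta>)))"
        by (simp add: algebra_simps)
      also have "\<dots> \<le> exp ((l * \<theta>)\<^sup>2 * \<sigma>2 / 2) * exp ((l * \<theta> * \<mu>)\<^sup>2 / 2)"
      proof (intro mult_left_mono)
        show "(1 + \<theta>) / 2 * exp (l * \<theta> * \<mu> * (sg s - sg s * \<theta>))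
            + (1 - \<theta>) / 2 * exp (l * \<theta> * \<mu> * (sg (\<not> s) - sg s * \<theta>)) \<le> exp ((l * \<theta> * \<mu>)\<^sup>2 / 2)"
        proof (cases s)
          case True then show ?thesis using hoeff[of \<theta> "l * \<theta> * \<mu>"] th by (simp add: sg_def algebra_simps)
        next
          case False then show ?thesis using hoeff[of \<theta> "- (l * \<theta> * \<mu>)"] th by (simp add: sg_def algebra_simps)
        qed
      qed simp
      finally show ?thesis using False by simp
    qed
  qed
  also have "\<dots> = exp ((l * c)\<^sup>2 / 2) ^ n * (exp ((l * \<theta>)\<^sup>2 * \<sigma>2 / 2) * exp ((l * \<theta> * \<mu>)\<^sup>2 / 2)) ^ (d - n)"
    using nd' by (simp add: prod_split_if)
  also have "\<dots> = exp (l\<^sup>2 * amp_sigma_sq \<theta> \<delta> d (Suc t) / 2)"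
    unfolding sig_Suc by (simp add: exp_of_nat_mult[symmetric] mult_exp_exp power_mult_distrib algebra_simps
        add_divide_distrib)
  finally show ?case .
qed



lemma tail:
  fixes X :: "'a \<Rightarrow> real" and p :: "'a pmf"
  assumes mgf: "\<And>l. measure_pmf.expectation p (\<lambda>y. exp (l * X y)) \<le> exp (l\<^sup>2 * v / 2)"
    and bd: "\<And>y. \<bar>X y\<bar> \<le> K" and v: "v > 0" and x: "x > 0"
  shows "measure_pmf.prob p {y. - x * sqrt v \<le> X y \<and> X y \<le> x * sqrt v} \<ge> 1 - 2 * exp (- x\<^sup>2 / 2)"
proof -
  define \<sigma> where "\<sigma> = sqrt v"
  have s: "\<sigma> > 0" using v by (simp add: \<sigma>_def)
  have s2: "\<sigma>\<^sup>2 = v" using v by (simp add: \<sigma>_def)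
  define l where "l = x / \<sigma>"
  have l: "l > 0" using s x by (simp add: l_def)
  have int: "integrable (measure_pmf p) (\<lambda>y. exp (a * X y))" for a
  proof -
    have "\<bar>a * X y\<bar> \<le> \<bar>a\<bar> * K" for y using bd[of y] by (simp add: abs_mult mult_left_mono)
    then show ?thesis by (rule integrable_exp_bounded)
  qed
  have key: "exp (- l * (x * \<sigma>)) * exp (l\<^sup>2 * v / 2) = exp (- x\<^sup>2 / 2)"
    using s by (simp add: mult_exp_exp l_def s2[symmetric] power2_eq_square field_simps)
  have P1: "measure_pmf.prob p {y. X y \<ge> x * \<sigma>} \<le> exp (- x\<^sup>2 / 2)"
  proof -
    have "measure_pmf.prob p {y \<in> UNIV. X y \<ge> x * \<sigma>} \<le> exp (- l * (x * \<sigma>)) * (\<integral>y\<in>UNIV. exp (l * X y) \<partial>p)"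
      by (rule measure_pmf.Chernoff_ineq_ge[OF l]) (auto simp: set_integrable_def int)
    also have "(\<integral>y\<in>UNIV. exp (l * X y) \<partial>p) = measure_pmf.expectation p (\<lambda>y. exp (l * X y))"
      using set_integral_space[OF int[of l]] by simp
    also have "exp (- l * (x * \<sigma>)) * \<dots> \<le> exp (- l * (x * \<sigma>)) * exp (l\<^sup>2 * v / 2)"
      by (intro mult_left_mono mgf) auto
    finally show ?thesis using key by simp
  qed
  have P2: "measure_pmf.prob p {y. X y \<le> - (x * \<sigma>)} \<le> exp (- x\<^sup>2 / 2)"
  proof -
    have "measure_pmf.prob p {y \<in> UNIV. X y \<le> - (x * \<sigma>)} \<le> exp (l * (- (x * \<sigma>))) * (\<integral>y\<in>UNIV. exp (- l * X y) \<partial>p)"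
      by (rule measure_pmf.Chernoff_ineq_le[OF l]) (use int[of "-l"] in \<open>auto simp: set_integrable_def\<close>)
    also have "(\<integral>y\<in>UNIV. exp (- l * X y) \<partial>p) = measure_pmf.expectation p (\<lambda>y. exp ((- l) * X y))"
      using set_integral_space[OF int[of "-l"]] by simp
    also have "exp (l * (- (x * \<sigma>))) * \<dots> \<le> exp (- l * (x * \<sigma>)) * exp ((- l)\<^sup>2 * v / 2)"
      using mgf[of "-l"] by (simp add: mult_left_mono)
    finally show ?thesis using key by simp
  qed
  define S where "S = {y. - x * \<sigma> \<le> X y \<and> X y \<le> x * \<sigma>}"
  have "measure_pmf.prob p (UNIV - S) \<le> measure_pmf.prob p ({y. X y \<ge> x * \<sigma>} \<union> {y. X y \<le> - (x * \<sigma>)})"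
    by (intro measure_pmf.finite_measure_mono) (auto simp: S_def)
  also have "\<dots> \<le> measure_pmf.prob p {y. X y \<ge> x * \<sigma>} + measure_pmf.prob p {y. X y \<le> - (x * \<sigma>)}"
    by (rule measure_subadditive) auto
  finally have "measure_pmf.prob p (UNIV - S) \<le> 2 * exp (- x\<^sup>2 / 2)" using P1 P2 by simp
  moreover have "measure_pmf.prob p (UNIV - S) = 1 - measure_pmf.prob p S"
    using measure_pmf.prob_compl[of S p] by simp
  ultimately show ?thesis by (simp add: S_def \<sigma>_def)
qed



lemma sig_closed:
  assumes "amp_alpha \<theta> \<delta> d \<noteq> 1"
  shows "amp_sigma_sq \<theta> \<delta> d t =
              (amp_alpha \<theta> \<delta> d ^ t - 1) / (amp_alpha \<theta> \<delta> d - 1) * sigma1_sq \<theta> \<delta> d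
              + ((amp_alpha \<theta> \<delta> d ^ (2 * t) - amp_alpha \<theta> \<delta> d ^ (t + 1) + amp_alpha \<theta> \<delta> d ^ t - amp_alpha \<theta> \<delta> d) / (amp_alpha \<theta> \<delta> d - 1) - 2 * (real t - 1) * amp_alpha \<theta> \<delta> d ^ t)
                / (amp_alpha \<theta> \<delta> d - 1)\<^sup>2 * (mu1 \<theta> \<delta> d)\<^sup>2"
proof (induction t)
  case 0
  have ne: "amp_alpha \<theta> \<delta> d - 1 \<noteq> 0" using assms by simp
  show ?case using ne by (simp add: field_simps)
next
  case (Suc t)
  define a where "a = amp_alpha \<theta> \<delta> d"
  have p1: "a ^ (2 * t) = (a ^ t)\<^sup>2" "a ^ (t + 1) = a * a ^ t"
    "a ^ (2 * Suc t) = (a * a ^ t)\<^sup>2" "a ^ (Suc t + 1) = a * (a * a ^ t)" "a ^ Suc t = a * a ^ t"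
    by (simp_all only: power_mult power_mult_distrib power_add power_Suc power_one_right mult.commute[of 2] power2_eq_square Suc_eq_plus1)
       (simp_all add: power_add power_mult_distrib power2_eq_square)
  show ?case
    using Suc sig_alg[where a=a and A="a ^ t" and sx="sigma1_sq \<theta> \<delta> d" and m="mu1 \<theta> \<delta> d" and t=t] assms
    unfolding a_def[symmetric] p1
    by (simp add: mu_closed[OF assms, folded a_def] a_def[symmetric])
qed

lemma amp_M_zero: "n_lab \<delta> d = 0 \<Longrightarrow> amp_M \<theta> \<delta> d i L v = 0"
  by (induction i arbitrary: v) (simp_all add: amp_M1_sum)

lemma amp_mu_zero: "mu1 \<theta> \<delta> d = 0 \<Longrightarrow> amp_mu \<theta> \<delta> d t = 0"
  by (induction t) simp_all

lemma sig_nonneg: "amp_alpha \<theta> \<delta> d \<ge> 0 \<Longrightarrow> sigma1_sq \<theta> \<delta> d \<ge> 0 \<Longrightarrow> amp_sigma_sq \<theta> \<delta> d t \<ge> 0"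
  by (induction t) simp_all

lemma sig_ge: "amp_alpha \<theta> \<delta> d \<ge> 0 \<Longrightarrow> sigma1_sq \<theta> \<delta> d \<ge> 0 \<Longrightarrow> 1 \<le> t \<Longrightarrow> amp_sigma_sq \<theta> \<delta> d t \<ge> sigma1_sq \<theta> \<delta> d"
  by (cases t) (simp_all add: sig_nonneg)

theorem theorem2:
  fixes \<theta> \<delta> :: real and d t :: nat and x :: real
  assumes "0 < \<theta>" and "\<theta> < 1"
    and "0 \<le> \<delta>" and "\<delta> \<le> 1"
    and "\<delta> * real d \<in> \<nat>"
    and "1 \<le> t" and "0 < x"
  defines "\<alpha> \<equiv> amp_alpha \<theta> \<delta> d"
    and "\<mu> \<equiv> amp_mu \<theta> \<delta> d t"
    and "\<sigma> \<equiv> sqrt (amp_sigma_sq \<theta> \<delta> d t)"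
  shows "(\<alpha> \<noteq> 1 \<longrightarrow>
            \<mu> = (\<alpha> ^ t - 1) / (\<alpha> - 1) * mu1 \<theta> \<delta> d \<and>
            amp_sigma_sq \<theta> \<delta> d t =
              (\<alpha> ^ t - 1) / (\<alpha> - 1) * sigma1_sq \<theta> \<delta> d
              + ((\<alpha> ^ (2 * t) - \<alpha> ^ (t + 1) + \<alpha> ^ t - \<alpha>) / (\<alpha> - 1) - 2 * (real t - 1) * \<alpha> ^ t)
                / (\<alpha> - 1)\<^sup>2 * (mu1 \<theta> \<delta> d)\<^sup>2)
       \<and> measure_pmf.prob (broadcast \<theta> d t True)
            {L. \<mu> - x * \<sigma> \<le> amp_M \<theta> \<delta> d t L [] \<and> amp_M \<theta> \<delta> d t L [] \<le> \<mu> + x * \<sigma>}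
           \<ge> 1 - 2 * exp (- x\<^sup>2 / 2)
       \<and> measure_pmf.prob (broadcast \<theta> d t False)
            {L. - \<mu> - x * \<sigma> \<le> amp_M \<theta> \<delta> d t L [] \<and> amp_M \<theta> \<delta> d t L [] \<le> - \<mu> + x * \<sigma>}
           \<ge> 1 - 2 * exp (- x\<^sup>2 / 2)"
proof -
  obtain k where k: "\<delta> * real d = real k" using assms(5) Nats_cases by metis
  have nk: "n_lab \<delta> d = k" by (simp add: n_lab_def k)
  have kd: "k \<le> d"
  proof -
    have "real k \<le> real d" using k assms(3,4) mult_right_mono[of \<delta> 1 "real d"] by simp
    then show ?thesis by simp
  qed
  have nd: "n_lab \<delta> d \<le> d" using nk kd by simp
  have nreal: "real (n_lab \<delta> d) = \<delta> * real d" using nk k by simp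
  define c where "c = ln ((1 + \<theta>) / (1 - \<theta>))"
  have cpos: "c > 0" using assms(1,2) by (simp add: c_def)
  have a0: "amp_alpha \<theta> \<delta> d \<ge> 0" using assms(3,4) by (simp add: amp_alpha_def)
  have s10: "sigma1_sq \<theta> \<delta> d \<ge> 0" using assms(3) by (simp add: sigma1_sq_def)
  have closed: "\<alpha> \<noteq> 1 \<longrightarrow>
            \<mu> = (\<alpha> ^ t - 1) / (\<alpha> - 1) * mu1 \<theta> \<delta> d \<and>
            amp_sigma_sq \<theta> \<delta> d t =
              (\<alpha> ^ t - 1) / (\<alpha> - 1) * sigma1_sq \<theta> \<delta> d
              + ((\<alpha> ^ (2 * t) - \<alpha> ^ (t + 1) + \<alpha> ^ t - \<alpha>) / (\<alpha> - 1) - 2 * (real t - 1) * \<alpha> ^ t)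
                / (\<alpha> - 1)\<^sup>2 * (mu1 \<theta> \<delta> d)\<^sup>2"
    unfolding \<alpha>_def \<mu>_def using mu_closed sig_closed by blast
  have tails: "measure_pmf.prob (broadcast \<theta> d t s)
            {L. - x * \<sigma> \<le> amp_M \<theta> \<delta> d t L [] - sg s * \<mu> \<and> amp_M \<theta> \<delta> d t L [] - sg s * \<mu> \<le> x * \<sigma>}
           \<ge> 1 - 2 * exp (- x\<^sup>2 / 2)" for s
  proof (cases "k = 0")
    case True
    have M0: "amp_M \<theta> \<delta> d t L [] = 0" for L using True nk by (simp add: amp_M_zero)
    have "mu1 \<theta> \<delta> d = 0" using True k by (simp add: mu1_def)
    then have m0: "\<mu> = 0" by (simp add: \<mu>_def amp_mu_zero)
    have "\<sigma> \<ge> 0" unfolding \<sigma>_def using sig_nonneg[OF a0 s10] by simp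
    then have "{L. - x * \<sigma> \<le> amp_M \<theta> \<delta> d t L [] - sg s * \<mu> \<and> amp_M \<theta> \<delta> d t L [] - sg s * \<mu> \<le> x * \<sigma>} = UNIV"
      using assms(7) by (auto simp: M0 m0)
    then show ?thesis by simp
  next
    case False
    have "sigma1_sq \<theta> \<delta> d > 0" using False k cpos by (simp add: sigma1_sq_def c_def[symmetric])
    then have vpos: "amp_sigma_sq \<theta> \<delta> d t > 0" using sig_ge[OF a0 s10 assms(6)] by linarith
    obtain B where B: "\<And>L v. \<bar>amp_M \<theta> \<delta> d t L v\<bar> \<le> B" using amp_M_bounded by blast
    have bd: "\<bar>amp_M \<theta> \<delta> d t L [] - sg s * \<mu>\<bar> \<le> B + \<bar>\<mu>\<bar>" for L
      using B[of L "[]"] by (cases s) (auto simp: sg_def)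
    show ?thesis unfolding \<sigma>_def
      by (rule tail[OF _ bd vpos assms(7)])
         (use mgf[OF assms(1,2) nd nreal] in \<open>simp add: \<mu>_def\<close>)
  qed
  have t1: "measure_pmf.prob (broadcast \<theta> d t True)
            {L. \<mu> - x * \<sigma> \<le> amp_M \<theta> \<delta> d t L [] \<and> amp_M \<theta> \<delta> d t L [] \<le> \<mu> + x * \<sigma>}
           \<ge> 1 - 2 * exp (- x\<^sup>2 / 2)"
  proof -
    have "{L. \<mu> - x * \<sigma> \<le> amp_M \<theta> \<delta> d t L [] \<and> amp_M \<theta> \<delta> d t L [] \<le> \<mu> + x * \<sigma>}
      = {L. - x * \<sigma> \<le> amp_M \<theta> \<delta> d t L [] - sg True * \<mu> \<and> amp_M \<theta> \<delta> d t L [] - sg True * \<mu> \<le> x * \<sigma>}"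
      by (auto simp: sg_def)
    then show ?thesis using tails[of True] by simp
  qed
  have t2: "measure_pmf.prob (broadcast \<theta> d t False)
            {L. - \<mu> - x * \<sigma> \<le> amp_M \<theta> \<delta> d t L [] \<and> amp_M \<theta> \<delta> d t L [] \<le> - \<mu> + x * \<sigma>}
           \<ge> 1 - 2 * exp (- x\<^sup>2 / 2)"
  proof -
    have "{L. - \<mu> - x * \<sigma> \<le> amp_M \<theta> \<delta> d t L [] \<and> amp_M \<theta> \<delta> d t L [] \<le> - \<mu> + x * \<sigma>}
      = {L. - x * \<sigma> \<le> amp_M \<theta> \<delta> d t L [] - sg False * \<mu> \<and> amp_M \<theta> \<delta> d t L [] - sg False * \<mu> \<le> x * \<sigma>}"
      by (auto simp: sg_def)
    then show ?thesis using tails[of False] by simp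
  qed
  show ?thesis using closed t1 t2 by blast
qed

end
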